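(* Let $(\mathcal{G},S)$ be an instance of \textsc{Temporally Disjoint Walks} where $\mathcal{G}$ is a temporal line, and let $\mathcal{S}$ be a solution (a family of pairwise temporally disjoint temporal $(s_i,z_i)$-walks, one for each $(s_i,z_i)\in S$) that minimizes the sum of the lengths of its walks among all solutions. Let $W\in\mathcal{S}$ be a temporal $(s,z)$-walk in which the transitions $(a,b,t),(b,a,t')$ with $t<t'$ are consecutive. Then there exists a temporal $(s',z')$-walk $W'$ in $\mathcal{S}$ that contains a transition $(c,a,t'')$ or $(a,c,t'')$ for some vertex $c$ and some $t''$ with $t<t''<t'$.
   Context: A temporal graph $\mathcal{G}=(V,E_1,\ldots,E_T)$ has vertex set $V$ and edge sets $E_1,\ldots,E_T\subseteq\binom{V}{2}$; it is a temporal line if its underlying graph $(V,\bigcup_i E_i)$ is a path. A temporal $(s,z)$-walk of length $k$ from $s=v_0$ to $z=v_k$ is a sequence of transitions $((v_{i-1},v_i,t_i))_{i=1}^k$ with $\{v_{i-1},v_i\}\in E_{t_i}$ and $t_1<\cdots<t_k$. It occupies $v_i$ during $[t_i,t_{i+1}]$ for $i\in[k-1]$, $v_0$ during $[t_1,t_1]$ and $v_k$ during $[t_k,t_k]$. Two temporal walks are temporally disjoint unless some vertex is occupied by both during intersecting time intervals. \textsc{Temporally Disjoint Walks} asks, given $\mathcal{G}$ and a multiset $S\subseteq V\times V$ of source-sink pairs, for pairwise temporally disjoint temporal $(s_i,z_i)$-walks, one for each $(s_i,z_i)\in S$. *)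

theory Defs
  imports Main
begin

type_synonym 'v transition = "'v \<times> 'v \<times> nat"
type_synonym 'v twalk = "'v transition list"

definition tr_src :: "'v transition \<Rightarrow> 'v" where "tr_src x = fst x"
definition tr_dst :: "'v transition \<Rightarrow> 'v" where "tr_dst x = fst (snd x)"
definition tr_time :: "'v transition \<Rightarrow> nat" where "tr_time x = snd (snd x)"

definition temporal_graph :: "'v set \<Rightarrow> (nat \<Rightarrow> 'v set set) \<Rightarrow> nat \<Rightarrow> bool" where
  "temporal_graph V E T \<longleftrightarrow> finite V \<and>
     (\<forall>i\<in>{1..T}. E i \<subseteq> {{x, y} | x y. x \<in> V \<and> y \<in> V \<and> x \<noteq> y})"

text \<open>Underlying graph (V, union of E 1..E T) is a path: vertices enumerated by a nonempty
  distinct list vs, edges exactly the consecutive pairs.\<close>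
definition temporal_line :: "'v set \<Rightarrow> (nat \<Rightarrow> 'v set set) \<Rightarrow> nat \<Rightarrow> bool" where
  "temporal_line V E T \<longleftrightarrow> temporal_graph V E T \<and>
     (\<exists>vs. vs \<noteq> [] \<and> distinct vs \<and> set vs = V \<and>
        (\<Union>i\<in>{1..T}. E i) = {{vs ! j, vs ! (j + 1)} | j. j + 1 < length vs})"

text \<open>Temporal (s,z)-walk. The empty walk (length 0) is a walk from s to s.\<close>
definition temporal_walk :: "'v set \<Rightarrow> (nat \<Rightarrow> 'v set set) \<Rightarrow> nat \<Rightarrow> 'v \<Rightarrow> 'v \<Rightarrow> 'v twalk \<Rightarrow> bool" where
  "temporal_walk V E T s z W \<longleftrightarrow>
     (W = [] \<and> s = z \<and> s \<in> V) \<or>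
     (W \<noteq> [] \<and> tr_src (hd W) = s \<and> tr_dst (last W) = z \<and>
      (\<forall>i < length W. tr_time (W ! i) \<in> {1..T} \<and>
          {tr_src (W ! i), tr_dst (W ! i)} \<in> E (tr_time (W ! i))) \<and>
      (\<forall>i. i + 1 < length W \<longrightarrow> tr_dst (W ! i) = tr_src (W ! (i + 1)) \<and>
          tr_time (W ! i) < tr_time (W ! (i + 1))))"

text \<open>Occupation list of a walk ((v_{i-1},v_i,t_i))_{i=1..k}: v_0 during [t_1,t_1],
  v_i during [t_i,t_{i+1}] for 1 <= i <= k-1, v_k during [t_k,t_k].
  (The empty walk occupies nothing.)\<close>
definition occupation :: "'v twalk \<Rightarrow> ('v \<times> nat set) list" where
  "occupation W = (if W = [] then [] else
     [(tr_src (hd W), {tr_time (hd W)..tr_time (hd W)})] @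
     map (\<lambda>i. (tr_dst (W ! (i - 1)), {tr_time (W ! (i - 1))..tr_time (W ! i)})) [1..<length W] @
     [(tr_dst (last W), {tr_time (last W)..tr_time (last W)})])"

definition temporally_disjoint :: "'v twalk \<Rightarrow> 'v twalk \<Rightarrow> bool" where
  "temporally_disjoint W1 W2 \<longleftrightarrow>
     \<not> (\<exists>(v, I) \<in> set (occupation W1). \<exists>(u, J) \<in> set (occupation W2). v = u \<and> I \<inter> J \<noteq> {})"

text \<open>The multiset S of source-sink pairs is given as a list (indexed family);
  a solution assigns the walk P ! i to the pair S ! i.\<close>
definition tdw_solution ::
  "'v set \<Rightarrow> (nat \<Rightarrow> 'v set set) \<Rightarrow> nat \<Rightarrow> ('v \<times> 'v) list \<Rightarrow> 'v twalk list \<Rightarrow> bool" where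
  "tdw_solution V E T S P \<longleftrightarrow> length P = length S \<and>
     (\<forall>i < length S. temporal_walk V E T (fst (S ! i)) (snd (S ! i)) (P ! i)) \<and>
     (\<forall>i < length S. \<forall>j < length S. i \<noteq> j \<longrightarrow> temporally_disjoint (P ! i) (P ! j))"

definition total_length :: "'v twalk list \<Rightarrow> nat" where
  "total_length P = sum_list (map length P)"

end

theory Submission imports Defs begin

definition occ :: "'v twalk \<Rightarrow> 'v \<Rightarrow> nat \<Rightarrow> bool" where
  "occ W v x \<longleftrightarrow> W \<noteq> [] \<and> ((v = tr_src (W!0) \<and> x = tr_time (W!0)) \<or>
     (\<exists>k. Suc k < length W \<and> v = tr_dst (W!k) \<and> tr_time (W!k) \<le> x \<and> x \<le> tr_time (W!Suc k)) \<or>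
     (v = tr_dst (last W) \<and> x = tr_time (last W)))"

lemma occupation_mem: "(v,I) \<in> set (occupation W) \<longleftrightarrow> W \<noteq> [] \<and> ((v = tr_src (W!0) \<and> I = {tr_time (W!0)..tr_time (W!0)}) \<or>
     (\<exists>k. Suc k < length W \<and> v = tr_dst (W!k) \<and> I = {tr_time (W!k)..tr_time (W!Suc k)}) \<or>
     (v = tr_dst (last W) \<and> I = {tr_time (last W)..tr_time (last W)}))"
proof (cases "W = []")
  case True then show ?thesis by (simp add: occupation_def)
next
  case False
  have "(v,I) \<in> set (map (\<lambda>i. (tr_dst (W ! (i - 1)), {tr_time (W ! (i - 1))..tr_time (W ! i)})) [1..<length W])
    \<longleftrightarrow> (\<exists>k. Suc k < length W \<and> v = tr_dst (W!k) \<and> I = {tr_time (W!k)..tr_time (W!Suc k)})"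
  proof
    assume "(v,I) \<in> set (map (\<lambda>i. (tr_dst (W ! (i - 1)), {tr_time (W ! (i - 1))..tr_time (W ! i)})) [1..<length W])"
    then obtain j where "j \<in> {1..<length W}" "v = tr_dst (W ! (j - 1))" "I = {tr_time (W ! (j - 1))..tr_time (W ! j)}" by auto
    then show "\<exists>k. Suc k < length W \<and> v = tr_dst (W!k) \<and> I = {tr_time (W!k)..tr_time (W!Suc k)}"
      by (intro exI[of _ "j - 1"]) auto
  next
    assume "\<exists>k. Suc k < length W \<and> v = tr_dst (W!k) \<and> I = {tr_time (W!k)..tr_time (W!Suc k)}"
    then obtain k where "Suc k < length W" "v = tr_dst (W!k)" "I = {tr_time (W!k)..tr_time (W!Suc k)}" by blast
    then show "(v,I) \<in> set (map (\<lambda>i. (tr_dst (W ! (i - 1)), {tr_time (W ! (i - 1))..tr_time (W ! i)})) [1..<length W])"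
      by (auto simp: image_iff intro!: bexI[of _ "Suc k"])
  qed
  with False show ?thesis unfolding occupation_def by (auto simp: hd_conv_nth)
qed

lemma occ_iff: "(\<exists>I. (v,I) \<in> set (occupation W) \<and> x \<in> I) \<longleftrightarrow> occ W v x"
  unfolding occupation_mem occ_def by auto

lemma td_iff: "temporally_disjoint W1 W2 \<longleftrightarrow> \<not> (\<exists>v x. occ W1 v x \<and> occ W2 v x)"
  unfolding temporally_disjoint_def occ_iff[symmetric] by blast

lemma occ_lo: "(v,I) \<in> set (occupation W) \<Longrightarrow> \<exists>lo hi c. I = {lo..hi} \<and> ((c,v,lo) \<in> set W \<or> (v,c,lo) \<in> set W)"
  unfolding occupation_mem
  apply (elim conjE disjE exE)
  subgoal by (metis nth_mem length_greater_0_conv prod.collapse tr_src_def tr_time_def tr_dst_def)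
  subgoal for k by (metis nth_mem Suc_lessD prod.collapse tr_src_def tr_time_def tr_dst_def)
  subgoal by (metis last_in_set prod.collapse tr_src_def tr_time_def tr_dst_def)
  done

lemma sum_upd: "k < length xs \<Longrightarrow> sum_list (xs[k:=y]) + xs!k = sum_list xs + (y::nat)"
  by (induction xs arbitrary: k) (auto split: nat.splits)


lemma del_nth: "Suc m < length W \<Longrightarrow> k < length W - 2 \<Longrightarrow>
   (take m W @ drop (Suc (Suc m)) W) ! k = W ! (if k < m then k else k + 2)"
  by (auto simp: nth_append min_def)

lemma del_len: "Suc m < length W \<Longrightarrow> length (take m W @ drop (Suc (Suc m)) W) = length W - 2"
  by auto

lemma occ_del:
  assumes cons: "\<forall>k. Suc k < length W \<longrightarrow> tr_dst (W!k) = tr_src (W!Suc k) \<and> tr_time (W!k) < tr_time (W!Suc k)"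
    and m: "Suc m < length W" and w1: "W!m = (a,b,t)" and w2: "W!Suc m = (b,a,t')"
    and o: "occ (take m W @ drop (Suc (Suc m)) W) v x"
  shows "occ W v x \<or> (v = a \<and> t \<le> x \<and> x \<le> t')"
proof -
  define W' where "W' = take m W @ drop (Suc (Suc m)) W"
  have len: "length W' = length W - 2" using m by (simp add: W'_def)
  have nth: "\<And>k. k < length W - 2 \<Longrightarrow> W' ! k = W ! (if k < m then k else k + 2)"
    using del_nth[OF m] by (simp add: W'_def)
  have s1: "tr_src (W!m) = a" "tr_dst (W!m) = b" "tr_time (W!m) = t"
    using w1 by (auto simp: tr_src_def tr_dst_def tr_time_def)
  have s2: "tr_src (W!Suc m) = b" "tr_dst (W!Suc m) = a" "tr_time (W!Suc m) = t'"
    using w2 by (auto simp: tr_src_def tr_dst_def tr_time_def)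
  have ne: "W \<noteq> []" using m by auto
  have o': "occ W' v x" using o by (simp add: W'_def)
  then have ne': "W' \<noteq> []" by (simp add: occ_def)
  then have l3: "0 < length W - 2" using len by (metis length_greater_0_conv)
  have occA1: "occ W a y" if "0 < m" "tr_time (W!(m-1)) \<le> y" "y \<le> t" for y
    unfolding occ_def using that ne m cons[rule_format, of "m-1"] s1
    by (intro conjI disjI2 disjI1 exI[of _ "m-1"]) auto
  have occA2: "occ W a y" if "Suc (Suc m) < length W" "t' \<le> y" "y \<le> tr_time (W!Suc (Suc m))" for y
    unfolding occ_def using that ne s2
    by (intro conjI disjI2 disjI1 exI[of _ "Suc m"]) auto
  from o' consider (first) "v = tr_src (W'!0)" "x = tr_time (W'!0)"
    | (mid) k where "Suc k < length W'" "v = tr_dst (W'!k)" "tr_time (W'!k) \<le> x" "x \<le> tr_time (W'!Suc k)"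
    | (last) "v = tr_dst (last W')" "x = tr_time (last W')"
    unfolding occ_def by blast
  then show ?thesis
  proof cases
    case first
    show ?thesis
    proof (cases "m = 0")
      case True
      then have "W'!0 = W!Suc (Suc 0)" using nth l3 by simp
      moreover have "tr_src (W!Suc (Suc 0)) = a" using cons[rule_format, of 1] s2 True l3 by auto
      moreover have "t' \<le> tr_time (W!Suc (Suc 0))" using cons[rule_format, of 1] s2 True l3 by auto
      ultimately show ?thesis using occA2[of "tr_time (W!Suc (Suc 0))"] first True l3 by auto
    next
      case False
      then have "W'!0 = W!0" using nth l3 by simp
      then show ?thesis using first ne by (simp add: occ_def)
    qed
  next
    case (mid k)
    consider "Suc k < m" | "k \<ge> m" | "Suc k = m" by linarith
    then show ?thesis
    proof cases
      case 1
      then show ?thesis using mid nth len ne unfolding occ_def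
        by (intro conjI disjI2 disjI1 exI[of _ k]) auto
    next
      case 2
      then show ?thesis using mid nth len ne unfolding occ_def
        by (intro conjI disjI2 disjI1 exI[of _ "k+2"]) auto
    next
      case 3
      have e1: "W'!k = W!(m-1)" "W'!Suc k = W!(m+2)" using 3 nth mid len by auto
      have "tr_dst (W!(m-1)) = a" using cons[rule_format, of "m-1"] 3 m s1 by auto
      then have va: "v = a" using mid e1 by simp
      consider "x \<le> t" | "t \<le> x \<and> x \<le> t'" | "t' \<le> x" by linarith
      then show ?thesis
      proof cases
        case 1 then show ?thesis using occA1 mid e1 3 va by auto
      next
        case 2 then show ?thesis using va by auto
      next
        case 3 then show ?thesis using occA2 mid e1 \<open>Suc k = m\<close> va len by auto
      qed
    qed
  next
    case last
    have lW': "last W' = W' ! (length W - 3)" using ne' len by (simp add: last_conv_nth)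
    show ?thesis
    proof (cases "Suc (Suc m) < length W")
      case True
      then have "Suc (Suc (length W - 3)) = length W - 1" by linarith
      then have "last W' = W ! (length W - 1)" using lW' nth[of "length W - 3"] len l3 \<open>Suc (Suc m) < length W\<close> by auto
      then show ?thesis using last ne by (simp add: occ_def last_conv_nth)
    next
      case False
      then have mm: "Suc (Suc m) = length W" using m by simp
      then have pos: "0 < m" using l3 by simp
      have "length W - 3 = m - 1" using mm by linarith
      then have "last W' = W ! (m - 1)" using lW' nth[of "length W - 3"] len l3 mm by auto
      moreover have "tr_dst (W!(m-1)) = a" "tr_time (W!(m-1)) \<le> t" using cons[rule_format, of "m-1"] pos m s1 by auto
      ultimately show ?thesis using occA1[of "tr_time (W!(m-1))"] last pos by auto
    qed
  qed
qed


lemma walk_del: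
  assumes tw: "temporal_walk V E T s z W" and sV: "s \<in> V"
    and m: "Suc m < length W" and w1: "W!m = (a,b,t)" and w2: "W!Suc m = (b,a,t')"
  shows "temporal_walk V E T s z (take m W @ drop (Suc (Suc m)) W)"
proof -
  define W' where "W' = take m W @ drop (Suc (Suc m)) W"
  have len: "length W' = length W - 2" using m by (simp add: W'_def)
  have nth: "\<And>k. k < length W - 2 \<Longrightarrow> W' ! k = W ! (if k < m then k else k + 2)"
    using del_nth[OF m] by (simp add: W'_def)
  have s1: "tr_src (W!m) = a" "tr_dst (W!m) = b" "tr_time (W!m) = t"
    using w1 by (auto simp: tr_src_def tr_dst_def tr_time_def)
  have s2: "tr_src (W!Suc m) = b" "tr_dst (W!Suc m) = a" "tr_time (W!Suc m) = t'"
    using w2 by (auto simp: tr_src_def tr_dst_def tr_time_def)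
  have ne: "W \<noteq> []" using m by auto
  with tw have hd: "tr_src (W!0) = s" and lst: "tr_dst (W!(length W - 1)) = z"
    and E: "\<forall>i < length W. tr_time (W ! i) \<in> {1..T} \<and> {tr_src (W ! i), tr_dst (W ! i)} \<in> E (tr_time (W ! i))"
    and cons: "\<forall>k. Suc k < length W \<longrightarrow> tr_dst (W!k) = tr_src (W!Suc k) \<and> tr_time (W!k) < tr_time (W!Suc k)"
    unfolding temporal_walk_def by (auto simp: hd_conv_nth last_conv_nth)
  have "temporal_walk V E T s z W'"
  proof (cases "W' = []")
    case True
    then have l2: "length W = 2" and m0: "m = 0" using len m by auto
    have "s = a" using hd m0 s1 by simp
    moreover have "z = a" using lst l2 s2 m0 by simp
    ultimately show ?thesis using True sV by (simp add: temporal_walk_def)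
  next
    case False
    then have l3: "0 < length W - 2" using len by (metis length_greater_0_conv)
    have h': "tr_src (hd W') = s"
    proof (cases "m = 0")
      case True
      then have "hd W' = W ! Suc (Suc 0)" using nth l3 False by (simp add: hd_conv_nth)
      then show ?thesis using cons[rule_format, of 1] s2 s1 hd True l3 by auto
    next
      case False
      then show ?thesis using nth l3 \<open>W' \<noteq> []\<close> hd by (simp add: hd_conv_nth)
    qed
    have lW': "last W' = W' ! (length W - 3)" using False len by (simp add: last_conv_nth)
    have l': "tr_dst (last W') = z"
    proof (cases "Suc (Suc m) < length W")
      case True
      then have "Suc (Suc (length W - 3)) = length W - 1" by linarith
      then have "last W' = W ! (length W - 1)" using lW' nth[of "length W - 3"] len l3 True by auto
      then show ?thesis using lst by simp
    next
      case F: False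
      then have mm: "Suc (Suc m) = length W" using m by simp
      then have pos: "0 < m" using l3 by simp
      have "length W - 3 = m - 1" using mm by linarith
      then have "last W' = W ! (m - 1)" using lW' nth[of "length W - 3"] len l3 mm by auto
      moreover have "tr_dst (W!(m-1)) = a" using cons[rule_format, of "m-1"] pos m s1 by auto
      moreover have "z = a" using lst mm s2 by (metis diff_Suc_1)
      ultimately show ?thesis by simp
    qed
    have E': "\<forall>i < length W'. tr_time (W' ! i) \<in> {1..T} \<and> {tr_src (W' ! i), tr_dst (W' ! i)} \<in> E (tr_time (W' ! i))"
    proof (intro allI impI)
      fix i assume "i < length W'"
      then have "i < length W - 2" using len by simp
      then have "W' ! i = W ! (if i < m then i else i + 2)" "(if i < m then i else i + 2) < length W"
        using nth by auto
      then show "tr_time (W' ! i) \<in> {1..T} \<and> {tr_src (W' ! i), tr_dst (W' ! i)} \<in> E (tr_time (W' ! i))"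
        using E by metis
    qed
    have C': "\<forall>i. i + 1 < length W' \<longrightarrow> tr_dst (W' ! i) = tr_src (W' ! (i + 1)) \<and>
          tr_time (W' ! i) < tr_time (W' ! (i + 1))"
    proof (intro allI impI)
      fix k assume k: "k + 1 < length W'"
      consider "Suc k < m" | "k \<ge> m" | "Suc k = m" by linarith
      then show "tr_dst (W' ! k) = tr_src (W' ! (k + 1)) \<and> tr_time (W' ! k) < tr_time (W' ! (k + 1))"
      proof cases
        case 1 then show ?thesis using k len nth cons[rule_format, of k] by auto
      next
        case 2 then show ?thesis using k len nth cons[rule_format, of "k+2"] by auto
      next
        case 3
        have e1: "W'!k = W!(m-1)" "W'!(k+1) = W!(m+2)" using 3 nth k len by auto
        have c1: "tr_dst (W!(m-1)) = a" "tr_time (W!(m-1)) < t" using cons[rule_format, of "m-1"] 3 m s1 by auto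
        have c2: "tr_src (W!(m+2)) = a" "t' < tr_time (W!(m+2))" using cons[rule_format, of "m+1"] 3 k len s2 by auto
        have c3: "t < t'" using cons[rule_format, of m] m s1 s2 by auto
        show ?thesis using e1 c1 c2 c3 by simp
      qed
    qed
    show ?thesis unfolding temporal_walk_def using False h' l' E' C' by blast
  qed
  then show ?thesis by (simp add: W'_def)
qed


lemma td_sym: "temporally_disjoint A B \<Longrightarrow> temporally_disjoint B A"
  unfolding td_iff by blast

theorem mainTheorem6:
  fixes V :: "'v set" and E :: "nat \<Rightarrow> 'v set set" and T :: nat
    and S :: "('v \<times> 'v) list" and P :: "'v twalk list"
    and i m :: nat and a b :: 'v and t t' :: nat
  assumes line: "temporal_line V E T"
    and S_V: "set S \<subseteq> V \<times> V"
    and sol: "tdw_solution V E T S P"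
    and opt: "\<And>Q. tdw_solution V E T S Q \<Longrightarrow> total_length P \<le> total_length Q"
    and i: "i < length P"
    and m: "Suc m < length (P ! i)"
    and tr1: "P ! i ! m = (a, b, t)"
    and tr2: "P ! i ! Suc m = (b, a, t')"
    and tt: "t < t'"
  shows "\<exists>j < length P. \<exists>c t''. ((c, a, t'') \<in> set (P ! j) \<or> (a, c, t'') \<in> set (P ! j))
             \<and> t < t'' \<and> t'' < t'"
proof (rule ccontr)
  assume H: "\<not> ?thesis"
  define W where "W = P ! i"
  have lS: "length P = length S" and walks: "\<forall>j < length S. temporal_walk V E T (fst (S ! j)) (snd (S ! j)) (P ! j)"
    and disj: "\<forall>j < length S. \<forall>l < length S. j \<noteq> l \<longrightarrow> temporally_disjoint (P ! j) (P ! l)"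
    using sol unfolding tdw_solution_def by auto
  have iS: "i < length S" using i lS by simp
  have tw: "temporal_walk V E T (fst (S ! i)) (snd (S ! i)) W" using walks iS W_def by simp
  have sV: "fst (S ! i) \<in> V" using S_V iS nth_mem by fastforce
  have mW: "Suc m < length W" using m W_def by simp
  have w1: "W ! m = (a,b,t)" and w2: "W ! Suc m = (b,a,t')" using tr1 tr2 W_def by auto
  have s1: "tr_src (W!m) = a" "tr_dst (W!m) = b" "tr_time (W!m) = t"
    using w1 by (auto simp: tr_src_def tr_dst_def tr_time_def)
  have s2: "tr_src (W!Suc m) = b" "tr_dst (W!Suc m) = a" "tr_time (W!Suc m) = t'"
    using w2 by (auto simp: tr_src_def tr_dst_def tr_time_def)
  have ne: "W \<noteq> []" using mW by auto
  with tw have cons: "\<forall>k. Suc k < length W \<longrightarrow> tr_dst (W!k) = tr_src (W!Suc k) \<and> tr_time (W!k) < tr_time (W!Suc k)"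
    unfolding temporal_walk_def by auto
  have occt: "occ W a t"
  proof (cases "m = 0")
    case True then show ?thesis using s1 ne unfolding occ_def by auto
  next
    case False
    then show ?thesis unfolding occ_def using ne mW cons[rule_format, of "m-1"] s1
      by (intro conjI disjI2 disjI1 exI[of _ "m-1"]) auto
  qed
  have occt': "occ W a t'"
  proof (cases "Suc (Suc m) < length W")
    case True then show ?thesis unfolding occ_def using ne cons[rule_format, of "Suc m"] s2
      by (intro conjI disjI2 disjI1 exI[of _ "Suc m"]) auto
  next
    case False
    then have "length W - 1 = Suc m" using mW by linarith
    then have "last W = W ! Suc m" using ne by (simp add: last_conv_nth)
    then show ?thesis using s2 ne unfolding occ_def by auto
  qed
  have key: "\<not> occ (P ! l) a x" if l: "l < length P" "l \<noteq> i" and x: "t \<le> x" "x \<le> t'" for l x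
  proof
    assume o: "occ (P ! l) a x"
    have tdl: "temporally_disjoint W (P ! l)" using disj l iS lS W_def by auto
    from o obtain I where I: "(a, I) \<in> set (occupation (P ! l))" "x \<in> I" using occ_iff by metis
    from occ_lo[OF I(1)] obtain lo hi c where lo: "I = {lo..hi}" "(c,a,lo) \<in> set (P ! l) \<or> (a,c,lo) \<in> set (P ! l)"
      by blast
    consider "lo \<le> t" | "t < lo \<and> lo < t'" | "t' \<le> lo" by linarith
    then show False
    proof cases
      case 1
      then have "t \<in> I" using lo I x by auto
      then have "occ (P ! l) a t" using I occ_iff by metis
      then show False using tdl occt td_iff by metis
    next
      case 2 then show False using H l lo by blast
    next
      case 3
      then have "t' \<in> I" using lo I x by auto
      then have "occ (P ! l) a t'" using I occ_iff by metis
      then show False using tdl occt' td_iff by metis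
    qed
  qed
  define W' where "W' = take m W @ drop (Suc (Suc m)) W"
  have tw': "temporal_walk V E T (fst (S ! i)) (snd (S ! i)) W'"
    unfolding W'_def by (rule walk_del[OF tw sV mW w1 w2])
  have td': "temporally_disjoint W' (P ! l)" if l: "l < length P" "l \<noteq> i" for l
  proof -
    have tdl: "temporally_disjoint W (P ! l)" using disj l iS lS W_def by auto
    show ?thesis unfolding td_iff
    proof
      assume "\<exists>v x. occ W' v x \<and> occ (P ! l) v x"
      then obtain v x where o: "occ W' v x" "occ (P ! l) v x" by blast
      from occ_del[OF cons mW w1 w2, of v x] o(1) have "occ W v x \<or> (v = a \<and> t \<le> x \<and> x \<le> t')"
        by (simp add: W'_def)
      then show False using o(2) tdl key[OF l] td_iff by metis
    qed
  qed
  define Q where "Q = P[i := W']"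
  have solQ: "tdw_solution V E T S Q"
    unfolding tdw_solution_def
  proof (intro conjI allI impI)
    show "length Q = length S" using lS by (simp add: Q_def)
  next
    fix j assume "j < length S"
    then show "temporal_walk V E T (fst (S ! j)) (snd (S ! j)) (Q ! j)"
      using walks tw' lS by (cases "j = i") (auto simp: Q_def)
  next
    fix j l assume jl: "j < length S" "l < length S" "j \<noteq> l"
    show "temporally_disjoint (Q ! j) (Q ! l)"
    proof (cases "j = i")
      case True then show ?thesis using jl td' lS i by (auto simp: Q_def)
    next
      case False
      show ?thesis
      proof (cases "l = i")
        case True then show ?thesis using jl td'[of j] td_sym lS i False by (auto simp: Q_def)
      next
        case F2: False then show ?thesis using jl disj False by (auto simp: Q_def)
      qed
    qed
  qed
  have lenW': "length W' = length W - 2" using mW by (simp add: W'_def)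
  have "total_length Q + length W = total_length P + length W'"
    unfolding total_length_def Q_def using sum_upd[of i "map length P" "length W'"] i W_def
    by (simp add: map_update)
  then have "total_length Q < total_length P" using lenW' mW by linarith
  with opt[OF solQ] show False by simp
qed

end
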